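(* Let $J,J'\subset\mathbb S$ with $\delta(J)=J$ and $\delta(J')=J'$. Let $y\in\tilde W$ and $\alpha\in\Sigma$, with reflection $s_\alpha\in W$. If there exist $w,w'\in W$ such that $w^{-1}y\delta(s_\alpha)\delta(w)\in\tilde W_J$ and $w'^{-1}y\delta(w')\in\tilde W_{J'}$, then $w^{-1}(\alpha)\in\Sigma_J$ or $w'^{-1}(\alpha)\in\Sigma_{J'}$.
   Context: Let $\tilde W=X_*(T)_\Gamma\rtimes W$ be the Iwahori–Weyl group of a quasi-split connected semisimple group $G$ over a local field $F$ (finite extension of $\mathbb Q_p$ or $\mathbb F_q((\epsilon))$) split over a tamely ramified extension, relative to a maximal $L$-split torus $S$ defined over $F$ with centralizer $T$, where $L$ is the completion of the maximal unramified extension of $F$ and $\Gamma=\mathrm{Gal}(\bar L/L)$. $\delta$ is the automorphism of $\tilde W$ and $W$ induced by the Frobenius of $L/F$. $\Sigma$ is the reduced root system on $X_*(T)_\Gamma\otimes\mathbb R$ whose affine roots are $v\mapsto\langle a,v\rangle+k$, $a\in\Sigma$, $k\in\mathbb Z$, with $W=W(\Sigma)$; $\mathbb S$ a set of simple roots (simple reflections) of $\Sigma$; for $J\subset\mathbb S$, $\Sigma_J$ is the set of roots spanned by $J$, $W_J$ the parabolic subgroup, $\tilde W_J=X_*(T)_\Gamma\rtimes W_J$. *)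

theory Defs
  imports "HOL-Analysis.Analysis"
begin

text \<open>Reflection in the hyperplane orthogonal to a (with respect to a W- and
Frobenius-invariant inner product on V = X_*(T)_Gamma tensor R).\<close>
definition refl :: "'v::real_inner \<Rightarrow> 'v \<Rightarrow> 'v" where
  "refl a v = v - (2 * (v \<bullet> a) / (a \<bullet> a)) *\<^sub>R a"

text \<open>Reduced (crystallographic) root system spanning V (G semisimple).\<close>
definition reduced_root_system :: "'v::euclidean_space set \<Rightarrow> bool" where
  "reduced_root_system R \<longleftrightarrow>
     finite R \<and> 0 \<notin> R \<and> span R = UNIV \<and>
     (\<forall>a\<in>R. \<forall>b\<in>R. refl a b \<in> R \<and> 2 * (b \<bullet> a) / (a \<bullet> a) \<in> \<int>) \<and>
     (\<forall>a\<in>R. \<forall>c::real. c *\<^sub>R a \<in> R \<longrightarrow> c = 1 \<or> c = -1)"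

definition simple_roots :: "'v::euclidean_space set \<Rightarrow> 'v set \<Rightarrow> bool" where
  "simple_roots R S \<longleftrightarrow> S \<subseteq> R \<and> independent S \<and>
     (\<forall>b\<in>R. \<exists>c. (\<forall>a\<in>S. c a \<in> \<int>) \<and> ((\<forall>a\<in>S. c a \<ge> 0) \<or> (\<forall>a\<in>S. c a \<le> 0)) \<and>
        b = (\<Sum>a\<in>S. c a *\<^sub>R a))"

text \<open>The group generated by the reflections s_a, a in A (W = weyl_gen Sigma,
W_J = weyl_gen J).\<close>
inductive_set weyl_gen :: "'v::real_inner set \<Rightarrow> ('v \<Rightarrow> 'v) set" for A where
  id: "id \<in> weyl_gen A"
| step: "a \<in> A \<Longrightarrow> w \<in> weyl_gen A \<Longrightarrow> refl a \<circ> w \<in> weyl_gen A"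

definition roots_J :: "'v::real_vector set \<Rightarrow> 'v set \<Rightarrow> 'v set" where
  "roots_J R J = R \<inter> span J"

definition deltaW :: "('v \<Rightarrow> 'v) \<Rightarrow> ('v \<Rightarrow> 'v) \<Rightarrow> ('v \<Rightarrow> 'v)" where
  "deltaW d w = d \<circ> w \<circ> inv d"

text \<open>Iwahori--Weyl group X \<rtimes> W as pairs (lambda, w).\<close>
definition iw_mult :: "(('v \<Rightarrow> 'v) \<Rightarrow> 'x \<Rightarrow> 'x) \<Rightarrow> ('x::ab_group_add \<times> ('v \<Rightarrow> 'v))
     \<Rightarrow> ('x \<times> ('v \<Rightarrow> 'v)) \<Rightarrow> ('x \<times> ('v \<Rightarrow> 'v))" where
  "iw_mult act p q = (fst p + act (snd p) (fst q), snd p \<circ> snd q)"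

definition iw_group :: "('v \<Rightarrow> 'v) set \<Rightarrow> ('x \<times> ('v \<Rightarrow> 'v)) set" where
  "iw_group W = {p. snd p \<in> W}"

definition deltaIW :: "('x \<Rightarrow> 'x) \<Rightarrow> ('v \<Rightarrow> 'v) \<Rightarrow> ('x \<times> ('v \<Rightarrow> 'v)) \<Rightarrow> ('x \<times> ('v \<Rightarrow> 'v))" where
  "deltaIW dX d p = (dX (fst p), deltaW d (snd p))"

definition iw_data :: "'v::euclidean_space set \<Rightarrow> (('v \<Rightarrow> 'v) \<Rightarrow> 'x::ab_group_add \<Rightarrow> 'x)
     \<Rightarrow> ('x \<Rightarrow> 'x) \<Rightarrow> ('v \<Rightarrow> 'v) \<Rightarrow> bool" where
  "iw_data R act dX d \<longleftrightarrow>
     act id = id \<and>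
     (\<forall>v\<in>weyl_gen R. \<forall>w\<in>weyl_gen R. act (v \<circ> w) = act v \<circ> act w) \<and>
     (\<forall>w\<in>weyl_gen R. \<forall>x y. act w (x + y) = act w x + act w y) \<and>
     bij dX \<and> (\<forall>x y. dX (x + y) = dX x + dX y) \<and>
     (\<forall>w\<in>weyl_gen R. \<forall>x. dX (act w x) = act (deltaW d w) (dX x))"

end

theory Submission
  imports Defs
begin

lemma refl_fix: "p \<bullet> a = 0 \<Longrightarrow> refl a p = p"
  by (simp add: refl_def)

lemma weyl_fix: "v \<in> weyl_gen J \<Longrightarrow> (\<forall>a\<in>J. p \<bullet> a = 0) \<Longrightarrow> v p = p"
  by (induction rule: weyl_gen.induct) (auto simp: refl_fix)

lemma refl_orth:
  fixes a :: "'v::euclidean_space"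
  assumes "a \<noteq> 0"
  shows "orthogonal_transformation (refl a)"
proof -
  have aa: "a \<bullet> a \<noteq> 0" using assms by simp
  have lin: "linear (refl a)"
    unfolding refl_def by (auto simp: linear_iff inner_add_left algebra_simps add_divide_distrib)
  have "refl a v \<bullet> refl a u = v \<bullet> u" for v u
    using aa by (simp add: refl_def inner_diff_left inner_diff_right field_simps inner_commute)
  then show ?thesis using lin by (simp add: orthogonal_transformation_def)
qed

lemma weyl_orth:
  fixes A :: "'v::euclidean_space set"
  shows "w \<in> weyl_gen A \<Longrightarrow> 0 \<notin> A \<Longrightarrow> orthogonal_transformation w"
proof (induction rule: weyl_gen.induct)
  case id
  then show ?case by (simp add: id_def)
next
  case (step a w)
  then show ?case using refl_orth[of a] by (metis orthogonal_transformation_compose)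
qed

lemma weyl_roots:
  "w \<in> weyl_gen R \<Longrightarrow> (\<forall>a\<in>R. \<forall>b\<in>R. refl a b \<in> R) \<Longrightarrow> b \<in> R \<Longrightarrow> w b \<in> R"
  by (induction arbitrary: b rule: weyl_gen.induct) auto

lemma riesz_ex:
  fixes f :: "'v::euclidean_space \<Rightarrow> real"
  assumes "linear f"
  shows "\<exists>p. \<forall>x. p \<bullet> x = f x"
proof -
  define p where "p = (\<Sum>b\<in>Basis. f b *\<^sub>R b)"
  have "p \<bullet> x = f x" for x
  proof -
    have "f x = f (\<Sum>b\<in>Basis. (x \<bullet> b) *\<^sub>R b)" by (simp add: euclidean_representation)
    also have "\<dots> = (\<Sum>b\<in>Basis. (x \<bullet> b) * f b)"
      using assms by (simp add: linear_sum linear_scale)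
    also have "\<dots> = p \<bullet> x" unfolding p_def inner_sum_left
      by (rule sum.cong) (auto simp: inner_commute)
    finally show ?thesis by simp
  qed
  then show ?thesis by blast
qed

lemma good_vector:
  fixes R S J :: "'v::euclidean_space set" and d :: "'v \<Rightarrow> 'v"
  assumes rs: "reduced_root_system R" and sr: "simple_roots R S"
    and od: "orthogonal_transformation d" and dS: "d ` S = S" and dJ: "d ` J = J" and JS: "J \<subseteq> S"
  shows "\<exists>p. d p = p \<and> (\<forall>a\<in>J. p \<bullet> a = 0) \<and> (\<forall>\<beta>\<in>R. p \<bullet> \<beta> = 0 \<longrightarrow> \<beta> \<in> span J)"
proof -
  have finR: "finite R" and spR: "span R = UNIV" using rs by (auto simp: reduced_root_system_def)
  have SR: "S \<subseteq> R" and indS: "independent S" using sr by (auto simp: simple_roots_def)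
  have finS: "finite S" using finR SR finite_subset by blast
  define g where "g a = (if a \<in> J then 0 else (1::real))" for a
  obtain f where lf: "linear f" and fS: "\<And>x. x \<in> S \<Longrightarrow> f x = g x"
    using linear_independent_extend[OF indS] by blast
  obtain p where pf: "\<And>x. p \<bullet> x = f x" using riesz_ex[OF lf] by blast
  have RspS: "R \<subseteq> span S"
  proof
    fix b assume "b \<in> R"
    then obtain c where "b = (\<Sum>a\<in>S. c a *\<^sub>R a)" using sr by (auto simp: simple_roots_def)
    then show "b \<in> span S" by (simp add: span_base span_scale span_sum)
  qed
  have spS: "span S = UNIV"
    using spR RspS by (metis span_minimal subspace_span top.extremum_uniqueI)
  have invd: "inv d (d x) = x" for x using orthogonal_transformation_inj[OF od] by (simp add: inv_f_f)
  have dinv: "d (inv d x) = x" for x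
    using orthogonal_transformation_surj[OF od] by (simp add: surj_f_inv_f)
  have "(d p - p) \<bullet> a = 0" if aS: "a \<in> S" for a
  proof -
    obtain b where b: "b \<in> S" "a = d b" using aS dS by blast
    have bJ: "b \<in> J \<longleftrightarrow> a \<in> J"
    proof
      assume "b \<in> J" then show "a \<in> J" using b dJ by blast
    next
      assume "a \<in> J" then obtain c where "c \<in> J" "a = d c" using dJ by blast
      then show "b \<in> J" using b orthogonal_transformation_inj[OF od] by (metis injD)
    qed
    have "d p \<bullet> a = p \<bullet> b" using b od by (simp add: orthogonal_transformation_def)
    also have "\<dots> = p \<bullet> a" using pf fS b aS bJ by (simp add: g_def)
    finally show ?thesis by (simp add: inner_diff_left)
  qed
  then have "orthogonal (d p - p) x" for x
    using orthogonal_to_span[of x S "d p - p"] spS by (auto simp: orthogonal_def)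
  then have dp: "d p = p" by (metis orthogonal_self right_minus_eq)
  have pJ: "\<forall>a\<in>J. p \<bullet> a = 0" using pf fS JS by (auto simp: g_def)
  have "\<beta> \<in> span J" if bR: "\<beta> \<in> R" and p0: "p \<bullet> \<beta> = 0" for \<beta>
  proof -
    obtain c where cZ: "\<forall>a\<in>S. c a \<in> \<int>" and sg: "(\<forall>a\<in>S. c a \<ge> 0) \<or> (\<forall>a\<in>S. c a \<le> 0)"
      and be: "\<beta> = (\<Sum>a\<in>S. c a *\<^sub>R a)" using sr bR by (auto simp: simple_roots_def)
    have "p \<bullet> \<beta> = (\<Sum>a\<in>S. c a * g a)"
      using fS by (simp add: be inner_sum_right pf)
    also have "\<dots> = (\<Sum>a\<in>S - J. c a * g a)"
      by (rule sum.mono_neutral_right) (auto simp: finS g_def)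
    also have "\<dots> = (\<Sum>a\<in>S - J. c a)"
      by (rule sum.cong) (auto simp: g_def)
    finally have s0: "(\<Sum>a\<in>S - J. c a) = 0" using p0 by simp
    have z: "\<forall>a\<in>S - J. c a = 0"
      using sg
    proof
      assume "\<forall>a\<in>S. c a \<ge> 0"
      then show ?thesis using sum_nonneg_eq_0_iff[of "S - J" c] s0 finS by auto
    next
      assume h: "\<forall>a\<in>S. c a \<le> 0"
      have "(\<Sum>a\<in>S - J. - c a) = 0" using s0 by (simp add: sum_negf)
      then show ?thesis using sum_nonneg_eq_0_iff[of "S - J" "\<lambda>a. - c a"] h finS by auto
    qed
    have "c a *\<^sub>R a \<in> span J" if "a \<in> S" for a
      using z that by (cases "a \<in> J") (auto simp: span_base span_scale span_zero)
    then show ?thesis by (simp add: be span_sum)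
  qed
  then show ?thesis using dp pJ by blast
qed

lemma root_preimage:
  fixes R :: "'v::euclidean_space set"
  assumes rs: "reduced_root_system R" and wR: "w \<in> weyl_gen R" and aR: "\<alpha> \<in> R"
  shows "\<exists>\<beta>\<in>R. \<alpha> = w \<beta> \<and> inv w \<alpha> = \<beta>"
proof -
  have finR: "finite R" and z: "0 \<notin> R" and cl: "\<forall>a\<in>R. \<forall>b\<in>R. refl a b \<in> R"
    using rs by (auto simp: reduced_root_system_def)
  have ow: "orthogonal_transformation w" using weyl_orth[OF wR z] .
  have inj: "inj w" using orthogonal_transformation_inj[OF ow] .
  have "w ` R \<subseteq> R" using weyl_roots[OF wR cl] by blast
  then have "w ` R = R" using endo_inj_surj[OF finR] inj by (meson inj_on_subset subset_UNIV)
  then obtain \<beta> where "\<beta> \<in> R" "\<alpha> = w \<beta>" using aR by blast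
  then show ?thesis using inj by (auto simp: inv_f_f)
qed

theorem lemma4p4p4:
  fixes R S J J' :: "'v::euclidean_space set"
    and d :: "'v \<Rightarrow> 'v"
    and act :: "('v \<Rightarrow> 'v) \<Rightarrow> 'x::ab_group_add \<Rightarrow> 'x"
    and dX :: "'x \<Rightarrow> 'x"
    and y :: "'x \<times> ('v \<Rightarrow> 'v)"
    and \<alpha> :: 'v
    and w w' :: "'v \<Rightarrow> 'v"
  assumes "reduced_root_system R"
    and "simple_roots R S"
    and "orthogonal_transformation d" and "d ` R = R" and "d ` S = S"
    and "iw_data R act dX d"
    and "J \<subseteq> S" and "J' \<subseteq> S" and "d ` J = J" and "d ` J' = J'"
    and "y \<in> iw_group (weyl_gen R)"
    and "\<alpha> \<in> R"
    and "w \<in> weyl_gen R" and "w' \<in> weyl_gen R"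
    and "iw_mult act (iw_mult act (iw_mult act (0, inv w) y) (deltaIW dX d (0, refl \<alpha>)))
               (deltaIW dX d (0, w)) \<in> iw_group (weyl_gen J)"
    and "iw_mult act (iw_mult act (0, inv w') y) (deltaIW dX d (0, w')) \<in> iw_group (weyl_gen J')"
  shows "inv w \<alpha> \<in> roots_J R J \<or> inv w' \<alpha> \<in> roots_J R J'"
proof -
  note rs = assms(1) and od = assms(3)
  have z: "0 \<notin> R" using rs by (auto simp: reduced_root_system_def)
  define u where "u = snd y"
  have uR: "u \<in> weyl_gen R" using assms(11) by (simp add: u_def iw_group_def)
  have ou: "orthogonal_transformation u" using weyl_orth[OF uR z] .
  have ow: "orthogonal_transformation w" using weyl_orth[OF assms(13) z] .
  have ow': "orthogonal_transformation w'" using weyl_orth[OF assms(14) z] .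
  have a0: "\<alpha> \<noteq> 0" using z assms(12) by auto
  have h1: "inv w \<circ> u \<circ> deltaW d (refl \<alpha>) \<circ> deltaW d w \<in> weyl_gen J"
    using assms(15) by (simp add: iw_mult_def deltaIW_def iw_group_def u_def)
  have h2: "inv w' \<circ> u \<circ> deltaW d w' \<in> weyl_gen J'"
    using assms(16) by (simp add: iw_mult_def deltaIW_def iw_group_def u_def)
  obtain p0 where p0: "d p0 = p0" "\<forall>a\<in>J. p0 \<bullet> a = 0" "\<forall>\<beta>\<in>R. p0 \<bullet> \<beta> = 0 \<longrightarrow> \<beta> \<in> span J"
    using good_vector[OF rs assms(2) od assms(5) assms(9) assms(7)] by blast
  obtain q0 where q0: "d q0 = q0" "\<forall>a\<in>J'. q0 \<bullet> a = 0" "\<forall>\<beta>\<in>R. q0 \<bullet> \<beta> = 0 \<longrightarrow> \<beta> \<in> span J'"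
    using good_vector[OF rs assms(2) od assms(5) assms(10) assms(8)] by blast
  have invd: "inv d (d x) = x" for x using orthogonal_transformation_inj[OF od] by (simp add: inv_f_f)
  have dp: "inv d p0 = p0" using invd[of p0] p0(1) by simp
  have dq: "inv d q0 = q0" using invd[of q0] q0(1) by simp
  have wi: "w (inv w x) = x" for x
    using orthogonal_transformation_surj[OF ow] by (simp add: surj_f_inv_f)
  have wi': "w' (inv w' x) = x" for x
    using orthogonal_transformation_surj[OF ow'] by (simp add: surj_f_inv_f)
  have "inv w (u (d (refl \<alpha> (w p0)))) = p0"
    using weyl_fix[OF h1 p0(2)] by (simp add: deltaW_def dp invd)
  then have e1: "u (d (refl \<alpha> (w p0))) = w p0" using wi by metis
  have "inv w' (u (d (w' q0))) = q0"
    using weyl_fix[OF h2 q0(2)] by (simp add: deltaW_def dq)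
  then have e2: "u (d (w' q0)) = w' q0" using wi' by metis
  have "refl \<alpha> (w p0) \<bullet> w' q0 = u (d (refl \<alpha> (w p0))) \<bullet> u (d (w' q0))"
    using ou od by (simp add: orthogonal_transformation_def)
  also have "\<dots> = w p0 \<bullet> w' q0" using e1 e2 by simp
  finally have "(w p0 \<bullet> \<alpha>) * (\<alpha> \<bullet> w' q0) = 0"
    using a0 by (simp add: refl_def inner_diff_left field_simps)
  then have "w p0 \<bullet> \<alpha> = 0 \<or> \<alpha> \<bullet> w' q0 = 0" by simp
  then show ?thesis
  proof
    assume h: "w p0 \<bullet> \<alpha> = 0"
    obtain \<beta> where b: "\<beta> \<in> R" "\<alpha> = w \<beta>" "inv w \<alpha> = \<beta>"
      using root_preimage[OF rs assms(13) assms(12)] by blast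
    have "p0 \<bullet> \<beta> = 0" using h b ow by (simp add: orthogonal_transformation_def)
    then show ?thesis using p0(3) b by (simp add: roots_J_def)
  next
    assume h: "\<alpha> \<bullet> w' q0 = 0"
    obtain \<beta> where b: "\<beta> \<in> R" "\<alpha> = w' \<beta>" "inv w' \<alpha> = \<beta>"
      using root_preimage[OF rs assms(14) assms(12)] by blast
    have "q0 \<bullet> \<beta> = 0" using h b ow' by (simp add: orthogonal_transformation_def inner_commute)
    then show ?thesis using q0(3) b by (simp add: roots_J_def)
  qed
qed

end
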